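(* Let $f$ be an intersection of $k$ halfspaces on $\mathbb{R}^n$ and let $\mathcal{D}$ be a distribution on $\mathbb{R}^n$ that is $\rho$-robust with respect to $f$, where $\rho>0$, and suppose $\mathrm{supp}(\mathcal{D})\not\subset f^{-1}(-1)$. Then $\mathcal{D}$ has margin $\frac{1}{2}\rho^2$ with respect to $f$.
   Context: An intersection of $k$ halfspaces is $f(x)=1$ if $w_i\cdot x>\theta_i$ for all $i\in[k]$, $f(x)=-1$ otherwise, with $\|w_i\|_2=1$, $\theta_i\in\mathbb{R}$. Let $R=\sup_{x\in\mathrm{supp}(\mathcal{D})}\|x\|_2$. $\mathcal{D}$ is $\rho$-robust with respect to $f$ if $\inf\{\|x-y\|_2: x\in\mathrm{supp}(\mathcal{D}), y\in\mathbb{R}^n, f(x)\ne f(y)\}/R\ge\rho$. $\mathcal{D}$ has margin $\rho'$ with respect to $f$ if for every $x\in\mathrm{supp}(\mathcal{D})$ with $f(x)=-1$ there is $i\in[k]$ with $(w_i\cdot x-\theta_i)/R\le-\rho'$. *)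

theory Defs
  imports "HOL-Probability.Probability"
begin

definition halfspaces_fn :: "(nat \<Rightarrow> 'a::real_inner) \<Rightarrow> (nat \<Rightarrow> real) \<Rightarrow> nat \<Rightarrow> 'a \<Rightarrow> int" where
  "halfspaces_fn w \<theta> k x = (if \<forall>i<k. w i \<bullet> x > \<theta> i then 1 else -1)"

definition msupp :: "'a::metric_space measure \<Rightarrow> 'a set" where
  "msupp M = {x. \<forall>e>0. emeasure M (ball x e) > 0}"

definition supp_radius :: "'a::real_normed_vector measure \<Rightarrow> real" where
  "supp_radius M = Sup (norm ` msupp M)"

text \<open>rho-robustness: inf{ |x-y| : x in supp, f x ~= f y } / R >= rho, written multiplicatively
  (R is required to be finite, i.e. the support bounded).\<close>
definition robust :: "'a::real_normed_vector measure \<Rightarrow> ('a \<Rightarrow> int) \<Rightarrow> real \<Rightarrow> bool" where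
  "robust M f \<rho> \<longleftrightarrow> bounded (msupp M) \<and>
     (\<forall>x\<in>msupp M. \<forall>y. f x \<noteq> f y \<longrightarrow> \<rho> * supp_radius M \<le> dist x y)"

definition has_margin :: "'a::real_inner measure \<Rightarrow> (nat \<Rightarrow> 'a) \<Rightarrow> (nat \<Rightarrow> real) \<Rightarrow> nat \<Rightarrow> real \<Rightarrow> bool" where
  "has_margin M w \<theta> k \<rho>' \<longleftrightarrow>
     (\<forall>x\<in>msupp M. halfspaces_fn w \<theta> k x = -1 \<longrightarrow>
        (\<exists>i<k. w i \<bullet> x - \<theta> i \<le> - \<rho>' * supp_radius M))"

end

theory Submission
  imports Defs
begin

theorem lemma2p6:
  fixes D :: "(real ^ 'n) measure"
    and w :: "nat \<Rightarrow> real ^ 'n" and \<theta> :: "nat \<Rightarrow> real" and k :: nat and \<rho> :: real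
  assumes "prob_space D" and "sets D = sets borel"
    and "\<And>i. i < k \<Longrightarrow> norm (w i) = 1"
    and "\<rho> > 0"
    and "robust D (halfspaces_fn w \<theta> k) \<rho>"
    and "\<not> msupp D \<subseteq> {x. halfspaces_fn w \<theta> k x = -1}"
  shows "has_margin D w \<theta> k (\<rho>^2 / 2)"
proof -
  define S where "S = msupp D"
  define R where "R = supp_radius D"
  define f where "f = halfspaces_fn w \<theta> k"
  have bnd: "bounded S" and rob: "\<And>x y. x \<in> S \<Longrightarrow> f x \<noteq> f y \<Longrightarrow> \<rho> * R \<le> dist x y"
    using assms(5) unfolding robust_def S_def R_def f_def by auto
  obtain p where pS: "p \<in> S" and fp: "f p = 1"
  proof -
    from assms(6) obtain p where "p \<in> msupp D" "halfspaces_fn w \<theta> k p \<noteq> -1" by blast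
    moreover hence "halfspaces_fn w \<theta> k p = 1" unfolding halfspaces_fn_def by (auto split: if_splits)
    ultimately show ?thesis using that unfolding S_def f_def by blast
  qed
  obtain B where B: "\<And>x. x \<in> S \<Longrightarrow> norm x \<le> B" using bnd unfolding bounded_iff by auto
  have bdd: "bdd_above (norm ` S)" by (rule bdd_aboveI2[where M=B]) (use B in auto)
  have nR: "\<And>x. x \<in> S \<Longrightarrow> norm x \<le> R"
    unfolding R_def supp_radius_def S_def[symmetric] using bdd by (auto intro: cSup_upper)
  have fpos: "\<And>y. f y = 1 \<longleftrightarrow> (\<forall>i<k. w i \<bullet> y > \<theta> i)"
    unfolding f_def halfspaces_fn_def by auto
  have pw: "w i \<bullet> p - \<theta> i \<ge> \<rho> * R" if i: "i < k" for i
  proof (rule ccontr)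
    assume c: "\<not> ?thesis"
    define r where "r = w i \<bullet> p - \<theta> i"
    have r0: "r > 0" using fp fpos i unfolding r_def by auto
    define y where "y = p - r *\<^sub>R w i"
    have "w i \<bullet> y = w i \<bullet> p - r * (w i \<bullet> w i)" unfolding y_def by (simp add: inner_diff_right)
    also have "w i \<bullet> w i = 1" using assms(3)[OF i] by (simp add: dot_square_norm)
    finally have "w i \<bullet> y = \<theta> i" unfolding r_def by simp
    hence "f y \<noteq> 1" using fpos i by auto
    hence "\<rho> * R \<le> dist p y" using rob[OF pS] fp by metis
    also have "dist p y = r" unfolding y_def dist_norm using r0 assms(3)[OF i] by simp
    finally show False using c r_def by simp
  qed
  show ?thesis
    unfolding has_margin_def S_def[symmetric] R_def[symmetric] f_def[symmetric]
  proof (intro ballI impI)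
    fix x assume xS: "x \<in> S" and fx: "f x = -1"
    show "\<exists>i<k. w i \<bullet> x - \<theta> i \<le> - (\<rho>^2/2) * R"
    proof (rule ccontr)
      assume "\<not> ?thesis"
      hence sx: "\<And>i. i < k \<Longrightarrow> w i \<bullet> x - \<theta> i > - (\<rho>^2/2) * R" by force
      have Rpos: "R > 0"
      proof (rule ccontr)
        assume "\<not> R > 0"
        hence "norm x \<le> 0" "norm p \<le> 0" using nR[OF xS] nR[OF pS] by linarith+
        hence "x = 0" "p = 0" by simp_all
        thus False using fx fp by simp
      qed
      define t where "t = \<rho> / (2 + \<rho>)"
      have t0: "0 < t" "t < 1" using assms(4) unfolding t_def by auto
      define y where "y = (1 - t) *\<^sub>R x + t *\<^sub>R p"
      have "f y = 1" unfolding fpos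
      proof (intro allI impI)
        fix i assume i: "i < k"
        have "w i \<bullet> y - \<theta> i = (1 - t) * (w i \<bullet> x - \<theta> i) + t * (w i \<bullet> p - \<theta> i)"
          unfolding y_def by (simp add: inner_add_right algebra_simps)
        also have "\<dots> > (1 - t) * (- (\<rho>^2/2) * R) + t * (\<rho> * R)"
          using sx[OF i] pw[OF i] t0
          by (intro add_less_le_mono mult_strict_left_mono mult_left_mono) auto
        also have "(1 - t) * (- (\<rho>^2/2) * R) + t * (\<rho> * R) = 0"
          unfolding t_def using assms(4) by (simp add: field_simps power2_eq_square)
        finally show "w i \<bullet> y > \<theta> i" by simp
      qed
      hence "\<rho> * R \<le> dist x y" using rob[OF xS] fx by simp
      also have "dist x y = t * norm (p - x)"
        unfolding y_def dist_norm using t0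
        by (simp add: algebra_simps norm_minus_commute flip: scaleR_diff_right)
      also have "\<dots> \<le> t * (2 * R)"
        using t0 norm_triangle_ineq4[of p x] nR[OF xS] nR[OF pS]
        by (intro mult_left_mono) auto
      also have "t * (2 * R) < \<rho> * R"
        unfolding t_def using assms(4) Rpos by (simp add: field_simps)
      finally show False by simp
    qed
  qed
qed

end
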